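(* Let $(L,\le,\bot,\top)$ be a complete lattice and $(\&_i,\swarrow^i,\nwarrow_i)$, $i=1,\dots,n$, adjoint triples on $L$ with $x\,\&_i\,\top=\top\,\&_i\,x=x$ for all $x\in L$ and all $i$. Let $(A,B,R,\sigma)$ be a normalized context having a decomposition into independent subcontexts $\{(A_\lambda,B_\lambda,R_\lambda,\sigma_\lambda)\mid\lambda\in\Lambda\}$. Let $\lambda\in\Lambda$, $a\in A_\lambda$ and $x\in L\setminus\{\bot\}$. Then for all $b\in B$, $$\phi_{a,x}^\downarrow(b)=\begin{cases}R(a,b)\nwarrow_{\sigma(a,b)}x & \text{if } b\in B_\lambda,\\ \bot&\text{otherwise.}\end{cases}$$
   Context: An adjoint triple on $L$ is a triple of maps $\&,\swarrow,\nwarrow\colon L\times L\to L$ with $x\le z\swarrow y\iff x\& y\le z\iff y\le z\nwarrow x$. A context is $(A,B,R,\sigma)$ with $A,B$ non-empty sets, $R\colon A\times B\to L$, $\sigma\colon A\times B\to\{1,\dots,n\}$; it is normalized if every $a\in A$ has $b_1,b_2$ with $R(a,b_1)\ne\bot$, $R(a,b_2)=\bot$, and every $b\in B$ has $a_1,a_2$ with $R(a_1,b)\neq\bot$, $R(a_2,b)=\bot$. For $f\colon A\to L$, $f^\downarrow(b)=\inf_{a\in A}R(a,b)\nwarrow_{\sigma(a,b)}f(a)$. The fuzzy-attribute $\phi_{a,x}\colon A\to L$ takes value $x$ at $a$ and $\bot$ elsewhere. A separable subcontext is a tuple $(Y,X,R_{Y\times X},\sigma_{Y\times X})$ (restrictions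 of $R,\sigma$) with $Y\subsetneq A$, $X\subsetneq B$ non-empty, some $a\in Y,b\in X$ with $R(a,b)\ne\bot$, $R(a,b')=\bot$ for all $(a,b')\in Y\times(B\setminus X)$, and $R(a',b)=\bot$ for all $(a',b)\in(A\setminus Y)\times X$. An operator $\&$ has zero-divisors if $x\&y=\bot$ for some $x\ne\bot$, $y\neq\bot$. The context has a decomposition into independent subcontexts $\{(A_\lambda,B_\lambda,R_\lambda,\sigma_\lambda)\mid\lambda\in\Lambda\}$ ($\Lambda$ non-empty, $R_\lambda,\sigma_\lambda$ restrictions to $A_\lambda\times B_\lambda$) if each tuple is a separable subcontext, the $A_\lambda$ are pairwise disjoint with union $A$, the $B_\lambda$ are pairwise disjoint with union $B$, and for every $\lambda$ and every $(a,b)\in((A\setminus A_\lambda)\times B_\lambda)\cup(A_\lambda\times(B\setminus B_\lambda))$ the conjunctor $\&_{\sigma(a,b)}$ has no zero-divisors. *)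

theory Defs
  imports Main
begin

definition adjoint_triple ::
  "('a::complete_lattice \<Rightarrow> 'a \<Rightarrow> 'a) \<Rightarrow> ('a \<Rightarrow> 'a \<Rightarrow> 'a) \<Rightarrow> ('a \<Rightarrow> 'a \<Rightarrow> 'a) \<Rightarrow> bool" where
  "adjoint_triple cj sw nw \<longleftrightarrow>
     (\<forall>x y z. (x \<le> sw z y \<longleftrightarrow> cj x y \<le> z) \<and> (cj x y \<le> z \<longleftrightarrow> y \<le> nw z x))"

definition is_context ::
  "nat \<Rightarrow> 'g set \<Rightarrow> 'm set \<Rightarrow> ('g \<Rightarrow> 'm \<Rightarrow> 'a) \<Rightarrow> ('g \<Rightarrow> 'm \<Rightarrow> nat) \<Rightarrow> bool" where
  "is_context n A B R \<sigma> \<longleftrightarrow> A \<noteq> {} \<and> B \<noteq> {} \<and> (\<forall>a\<in>A. \<forall>b\<in>B. \<sigma> a b \<in> {1..n})"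

definition normalized ::
  "'g set \<Rightarrow> 'm set \<Rightarrow> ('g \<Rightarrow> 'm \<Rightarrow> 'a::complete_lattice) \<Rightarrow> bool" where
  "normalized A B R \<longleftrightarrow>
     (\<forall>a\<in>A. (\<exists>b1\<in>B. R a b1 \<noteq> bot) \<and> (\<exists>b2\<in>B. R a b2 = bot)) \<and>
     (\<forall>b\<in>B. (\<exists>a1\<in>A. R a1 b \<noteq> bot) \<and> (\<exists>a2\<in>A. R a2 b = bot))"

definition down ::
  "(nat \<Rightarrow> 'a \<Rightarrow> 'a \<Rightarrow> 'a::complete_lattice) \<Rightarrow> 'g set \<Rightarrow> ('g \<Rightarrow> 'm \<Rightarrow> 'a) \<Rightarrow> ('g \<Rightarrow> 'm \<Rightarrow> nat)
    \<Rightarrow> ('g \<Rightarrow> 'a) \<Rightarrow> 'm \<Rightarrow> 'a" where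
  "down nw A R \<sigma> f b = (INF a\<in>A. nw (\<sigma> a b) (R a b) (f a))"

definition phi :: "'g \<Rightarrow> 'a::complete_lattice \<Rightarrow> 'g \<Rightarrow> 'a" where
  "phi a x = (\<lambda>a'. if a' = a then x else bot)"

definition separable_subcontext ::
  "'g set \<Rightarrow> 'm set \<Rightarrow> ('g \<Rightarrow> 'm \<Rightarrow> 'a::complete_lattice) \<Rightarrow> 'g set \<Rightarrow> 'm set \<Rightarrow> bool" where
  "separable_subcontext A B R Y X \<longleftrightarrow>
     Y \<subset> A \<and> X \<subset> B \<and> Y \<noteq> {} \<and> X \<noteq> {} \<and>
     (\<exists>a\<in>Y. \<exists>b\<in>X. R a b \<noteq> bot) \<and>
     (\<forall>a\<in>Y. \<forall>b'\<in>B - X. R a b' = bot) \<and>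
     (\<forall>a'\<in>A - Y. \<forall>b\<in>X. R a' b = bot)"

definition has_zero_divisors :: "('a::complete_lattice \<Rightarrow> 'a \<Rightarrow> 'a) \<Rightarrow> bool" where
  "has_zero_divisors cj \<longleftrightarrow> (\<exists>x y. x \<noteq> bot \<and> y \<noteq> bot \<and> cj x y = bot)"

definition independent_decomposition ::
  "(nat \<Rightarrow> 'a::complete_lattice \<Rightarrow> 'a \<Rightarrow> 'a) \<Rightarrow> 'g set \<Rightarrow> 'm set \<Rightarrow> ('g \<Rightarrow> 'm \<Rightarrow> 'a)
    \<Rightarrow> ('g \<Rightarrow> 'm \<Rightarrow> nat) \<Rightarrow> 'l set \<Rightarrow> ('l \<Rightarrow> 'g set) \<Rightarrow> ('l \<Rightarrow> 'm set) \<Rightarrow> bool" where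
  "independent_decomposition cj A B R \<sigma> \<Lambda> As Bs \<longleftrightarrow>
     \<Lambda> \<noteq> {} \<and>
     (\<forall>l\<in>\<Lambda>. separable_subcontext A B R (As l) (Bs l)) \<and>
     (\<forall>l\<in>\<Lambda>. \<forall>l'\<in>\<Lambda>. l \<noteq> l' \<longrightarrow> As l \<inter> As l' = {} \<and> Bs l \<inter> Bs l' = {}) \<and>
     (\<Union>l\<in>\<Lambda>. As l) = A \<and> (\<Union>l\<in>\<Lambda>. Bs l) = B \<and>
     (\<forall>l\<in>\<Lambda>. \<forall>(a,b) \<in> ((A - As l) \<times> Bs l) \<union> (As l \<times> (B - Bs l)).
        \<not> has_zero_divisors (cj (\<sigma> a b)))"

end

theory Submission
  imports Defs
begin

theorem lemma29:
  fixes n :: nat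
    and cj sw nw :: "nat \<Rightarrow> 'a::complete_lattice \<Rightarrow> 'a \<Rightarrow> 'a"
    and A :: "'g set" and B :: "'m set"
    and R :: "'g \<Rightarrow> 'm \<Rightarrow> 'a" and \<sigma> :: "'g \<Rightarrow> 'm \<Rightarrow> nat"
    and \<Lambda> :: "'l set" and As :: "'l \<Rightarrow> 'g set" and Bs :: "'l \<Rightarrow> 'm set"
    and l :: 'l and a :: 'g and x :: 'a
  assumes adj: "\<forall>i\<in>{1..n}. adjoint_triple (cj i) (sw i) (nw i)"
    and unit: "\<forall>i\<in>{1..n}. \<forall>y. cj i y top = y \<and> cj i top y = y"
    and ctx: "is_context n A B R \<sigma>"
    and norm: "normalized A B R"
    and dec: "independent_decomposition cj A B R \<sigma> \<Lambda> As Bs"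
    and l: "l \<in> \<Lambda>" and a: "a \<in> As l" and x: "x \<noteq> bot"
  shows "\<forall>b\<in>B. down nw A R \<sigma> (phi a x) b =
           (if b \<in> Bs l then nw (\<sigma> a b) (R a b) x else bot)"
proof
  fix b assume b: "b \<in> B"
  have aA: "a \<in> A" using dec l a unfolding independent_decomposition_def by blast
  have sig: "\<And>a'. a' \<in> A \<Longrightarrow> \<sigma> a' b \<in> {1..n}" using ctx b unfolding is_context_def by blast
  have adjI: "\<And>i x y z. i \<in> {1..n} \<Longrightarrow> (cj i x y \<le> z \<longleftrightarrow> y \<le> nw i z x) \<and> (x \<le> sw i z y \<longleftrightarrow> cj i x y \<le> z)"
    using adj unfolding adjoint_triple_def by blast
  have topt: "\<And>a'. a' \<in> A \<Longrightarrow> a' \<noteq> a \<Longrightarrow> nw (\<sigma> a' b) (R a' b) (phi a x a') = top"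
  proof -
    fix a' assume "a' \<in> A" "a' \<noteq> a"
    then have i: "\<sigma> a' b \<in> {1..n}" and p: "phi a x a' = bot" using sig by (auto simp: phi_def)
    have "cj (\<sigma> a' b) bot top \<le> R a' b" using adjI[OF i, of bot top "R a' b"] bot_least by metis
    then show "nw (\<sigma> a' b) (R a' b) (phi a x a') = top" using adjI[OF i, of bot top "R a' b"] p top_unique by metis
  qed
  have eq: "down nw A R \<sigma> (phi a x) b = nw (\<sigma> a b) (R a b) x"
  proof -
    have "down nw A R \<sigma> (phi a x) b = (INF a'\<in>A. nw (\<sigma> a' b) (R a' b) (phi a x a'))" by (simp add: down_def)
    also have "\<dots> = nw (\<sigma> a b) (R a b) x"
    proof (rule antisym)
      show "(INF a'\<in>A. nw (\<sigma> a' b) (R a' b) (phi a x a')) \<le> nw (\<sigma> a b) (R a b) x"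
        using INF_lower[OF aA, of "\<lambda>a'. nw (\<sigma> a' b) (R a' b) (phi a x a')"] by (simp add: phi_def)
      show "nw (\<sigma> a b) (R a b) x \<le> (INF a'\<in>A. nw (\<sigma> a' b) (R a' b) (phi a x a'))"
      proof (rule INF_greatest)
        fix a' assume "a' \<in> A"
        then show "nw (\<sigma> a b) (R a b) x \<le> nw (\<sigma> a' b) (R a' b) (phi a x a')"
          using topt[of a'] by (cases "a' = a") (auto simp: phi_def)
      qed
    qed
    finally show ?thesis .
  qed
  show "down nw A R \<sigma> (phi a x) b = (if b \<in> Bs l then nw (\<sigma> a b) (R a b) x else bot)"
  proof (cases "b \<in> Bs l")
    case True then show ?thesis using eq by simp
  next
    case False
    have sep: "separable_subcontext A B R (As l) (Bs l)" using dec l unfolding independent_decomposition_def by blast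
    have R0: "R a b = bot" using sep a b False unfolding separable_subcontext_def by blast
    have nzd: "\<not> has_zero_divisors (cj (\<sigma> a b))"
    proof -
      have "(a, b) \<in> ((A - As l) \<times> Bs l) \<union> (As l \<times> (B - Bs l))" using a b False by blast
      then show ?thesis using dec l unfolding independent_decomposition_def by blast
    qed
    have i: "\<sigma> a b \<in> {1..n}" using sig aA .
    let ?y = "nw (\<sigma> a b) bot x"
    have "cj (\<sigma> a b) x ?y \<le> bot" using adjI[OF i, of x ?y bot] by simp
    then have "cj (\<sigma> a b) x ?y = bot" by (simp add: bot_unique)
    then have "?y = bot" using nzd x unfolding has_zero_divisors_def by blast
    then show ?thesis using eq R0 False by simp
  qed
qed

end
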